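(* For every positive integer $n$, as formal power series in $z$ (with coefficients polynomials in $q,t$), \[ \sum_{k \geq 0} \overline{{ n+k-1 \brack k}}_{q,t} z^k q^k = \frac{(-tzq^2;q)_{n-1}}{(zq;q)_{n}}. \]
   Context: An overpartition is a partition (a non-increasing finite sequence of positive integers) in which the last (i.e. smallest-position-last) occurrence of each distinct part size may be overlined. Its weight $|\lambda|$ is the sum of its parts. For integers $a,b$ with $0\le b\le a$, $\overline{{a \brack b}}_{q,t}$ denotes the polynomial $\sum_{\lambda} t^{\#_o(\lambda)} q^{|\lambda|}$, the sum running over all overpartitions $\lambda$ with largest part at most $a-b$ and at most $b$ parts, where $\#_o(\lambda)$ is the number of overlined parts of $\lambda$; for other integer pairs $(a,b)$ it is $0$. Notation: $(x;q)_k=(x)_k=\prod_{j=1}^{k}(1-xq^{j-1})$, with $(x)_0=1$. *)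

theory Defs
  imports "HOL-Computational_Algebra.Formal_Power_Series"
begin

text \<open>An overpartition is encoded as a pair (xs, S): xs is the underlying partition
(a non-increasing list of positive integers) and S is the set of part sizes whose
last occurrence is overlined (S must be a subset of the part sizes of xs).\<close>

definition overpartitions :: "nat \<Rightarrow> nat \<Rightarrow> (nat list \<times> nat set) set" where
  "overpartitions m b = {(xs, S). sorted_wrt (\<ge>) xs \<and> (\<forall>x\<in>set xs. 0 < x \<and> x \<le> m)
       \<and> length xs \<le> b \<and> S \<subseteq> set xs}"

definition ogauss :: "int \<Rightarrow> int \<Rightarrow> 'a::comm_ring_1 \<Rightarrow> 'a \<Rightarrow> 'a" where
  "ogauss a b q t = (if 0 \<le> b \<and> b \<le> a then
     (\<Sum>p\<in>overpartitions (nat (a - b)) (nat b). t ^ card (snd p) * q ^ sum_list (fst p))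
   else 0)"

definition qpoch :: "'a::comm_ring_1 \<Rightarrow> 'a \<Rightarrow> nat \<Rightarrow> 'a" where
  "qpoch x q k = (\<Prod>j<k. (1 - x * q ^ j))"

end

theory Submission
  imports Defs
begin

unbundle fps_syntax

definition Gs :: "nat \<Rightarrow> nat \<Rightarrow> 'a::comm_ring_1 \<Rightarrow> 'a \<Rightarrow> 'a" where
  "Gs m b q t = (\<Sum>p\<in>overpartitions m b. t ^ card (snd p) * q ^ sum_list (fst p))"

lemma op_finite: "finite (overpartitions m b)"
proof -
  have "overpartitions m b \<subseteq> {xs. set xs \<subseteq> {0..m} \<and> length xs \<le> b} \<times> Pow {0..m}"
    unfolding overpartitions_def by auto
  moreover have "finite ({xs. set xs \<subseteq> {0..m} \<and> length xs \<le> b} \<times> Pow {0..m})"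
    by (intro finite_cartesian_product finite_lists_length_le) auto
  ultimately show ?thesis by (rule finite_subset)
qed

lemma op_b0: "overpartitions m 0 = {([], {})}"
  unfolding overpartitions_def by auto

lemma op_m0: "overpartitions 0 b = {([], {})}"
proof -
  have "\<And>xs. (\<forall>x\<in>set xs. 0 < x \<and> x \<le> (0::nat)) \<Longrightarrow> xs = []"
    by (case_tac xs) auto
  then show ?thesis unfolding overpartitions_def by auto
qed

lemma Gs_b0: "Gs m 0 q t = 1"
  unfolding Gs_def op_b0 by simp

lemma Gs_m0: "Gs 0 b q t = 1"
  unfolding Gs_def op_m0 by simp

lemma op_split:
  "overpartitions (Suc m) (Suc b) =
     overpartitions m (Suc b) \<union>
     ((\<lambda>(ys, S). (Suc m # ys, S)) ` overpartitions (Suc m) b \<union>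
     (\<lambda>(ys, S). (Suc m # ys, insert (Suc m) S)) ` overpartitions m b)"
  (is "?L = ?A \<union> (?E \<union> ?D)")
proof
  show "?L \<subseteq> ?A \<union> (?E \<union> ?D)"
  proof
    fix p assume p: "p \<in> ?L"
    obtain xs S where pxs: "p = (xs, S)" by (cases p)
    have srt: "sorted_wrt (\<ge>) xs" and bd: "\<forall>x\<in>set xs. 0 < x \<and> x \<le> Suc m"
      and len: "length xs \<le> Suc b" and sub: "S \<subseteq> set xs"
      using p pxs unfolding overpartitions_def by auto
    show "p \<in> ?A \<union> (?E \<union> ?D)"
    proof (cases "Suc m \<in> set xs")
      case False
      then have "\<forall>x\<in>set xs. 0 < x \<and> x \<le> m" using bd by (metis le_SucE)
      then show ?thesis using srt len sub pxs unfolding overpartitions_def by auto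
    next
      case True
      then obtain h ys where xs: "xs = h # ys" by (cases xs) auto
      have "h = Suc m" using True srt bd xs by auto
      note xs' = xs[unfolded this]
      have srt': "sorted_wrt (\<ge>) ys" and bd': "\<forall>x\<in>set ys. 0 < x \<and> x \<le> Suc m"
        and len': "length ys \<le> b" using srt bd len xs' by auto
      show ?thesis
      proof (cases "Suc m \<in> set ys \<or> Suc m \<notin> S")
        case True
        then have "S \<subseteq> set ys" using sub xs' by auto
        then have "(ys, S) \<in> overpartitions (Suc m) b"
          using srt' bd' len' unfolding overpartitions_def by auto
        then have "p \<in> ?E" using pxs xs' by force
        then show ?thesis by blast
      next
        case False
        then have nin: "Suc m \<notin> set ys" and inS: "Suc m \<in> S" by auto
        have "\<forall>x\<in>set ys. 0 < x \<and> x \<le> m" using bd' nin by (metis le_SucE)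
        moreover have "S - {Suc m} \<subseteq> set ys" using sub xs' by auto
        ultimately have "(ys, S - {Suc m}) \<in> overpartitions m b"
          using srt' len' unfolding overpartitions_def by auto
        moreover have "p = (Suc m # ys, insert (Suc m) (S - {Suc m}))"
          using pxs xs' inS by auto
        ultimately have "p \<in> ?D" by force
        then show ?thesis by blast
      qed
    qed
  qed
next
  show "?A \<union> (?E \<union> ?D) \<subseteq> ?L"
    unfolding overpartitions_def by (auto simp: le_Suc_eq)
qed

lemma Gs_rec:
  "Gs (Suc m) (Suc b) q t = Gs m (Suc b) q t + q ^ Suc m * Gs (Suc m) b q t
      + t * q ^ Suc m * Gs m b q t"
proof -
  let ?f = "\<lambda>p. t ^ card (snd p) * q ^ sum_list (fst p)"
  let ?A = "overpartitions m (Suc b)"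
  let ?E = "(\<lambda>(ys, S). (Suc m # ys, S)) ` overpartitions (Suc m) b"
  let ?D = "(\<lambda>(ys, S). (Suc m # ys, insert (Suc m) S)) ` overpartitions m b"
  have fA: "finite ?A" and fE: "finite ?E" and fD: "finite ?D" by (auto simp: op_finite)
  have d1: "?E \<inter> ?D = {}"
  proof -
    { fix ys S ys' S'
      assume "(ys, S) \<in> overpartitions (Suc m) b" "(ys', S') \<in> overpartitions m b"
        "(Suc m # ys, S) = (Suc m # ys', insert (Suc m) S')"
      then have False unfolding overpartitions_def by auto }
    then show ?thesis by fastforce
  qed
  have d2: "?A \<inter> (?E \<union> ?D) = {}" unfolding overpartitions_def by auto
  have iE: "inj_on (\<lambda>(ys, S). (Suc m # ys, S)) (overpartitions (Suc m) b)"
    by (auto simp: inj_on_def)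
  have iD: "inj_on (\<lambda>(ys, S). (Suc m # ys, insert (Suc m) S)) (overpartitions m b)"
  proof (rule inj_onI)
    fix x y
    assume a: "x \<in> overpartitions m b" "y \<in> overpartitions m b"
      "(\<lambda>(ys, S). (Suc m # ys, insert (Suc m) S)) x = (\<lambda>(ys, S). (Suc m # ys, insert (Suc m) S)) y"
    obtain ys S ys' S' where xy: "x = (ys, S)" "y = (ys', S')" by (cases x, cases y)
    have "Suc m \<notin> S" "Suc m \<notin> S'" using a(1,2) xy unfolding overpartitions_def by fastforce+
    moreover have "ys = ys'" "insert (Suc m) S = insert (Suc m) S'" using a(3) xy by auto
    ultimately show "x = y" using xy by (metis insert_ident)
  qed
  have sE: "sum ?f ?E = q ^ Suc m * Gs (Suc m) b q t"
    unfolding Gs_def sum.reindex[OF iE] sum_distrib_left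
    by (rule sum.cong) (auto simp: algebra_simps power_add)
  have sD: "sum ?f ?D = t * q ^ Suc m * Gs m b q t"
    unfolding Gs_def sum.reindex[OF iD] sum_distrib_left
  proof (rule sum.cong[OF refl])
    fix p assume a: "p \<in> overpartitions m b"
    obtain ys S where p: "p = (ys, S)" by (cases p)
    have "Suc m \<notin> S" "finite S" using a p unfolding overpartitions_def
      by (fastforce, auto intro: finite_subset)
    then show "(?f \<circ> (\<lambda>(ys, S). (Suc m # ys, insert (Suc m) S))) p =
        t * q ^ Suc m * (t ^ card (snd p) * q ^ sum_list (fst p))"
      using p by (simp add: power_add algebra_simps)
  qed
  have "Gs (Suc m) (Suc b) q t = sum ?f ?A + (sum ?f ?E + sum ?f ?D)"
    unfolding Gs_def op_split
    by (simp add: sum.union_disjoint fA fE fD d1 d2)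
  also have "\<dots> = Gs m (Suc b) q t + q ^ Suc m * Gs (Suc m) b q t
      + t * q ^ Suc m * Gs m b q t" by (simp add: sE sD Gs_def add.assoc)
  finally show ?thesis .
qed

unbundle fps_syntax

definition Fs :: "nat \<Rightarrow> 'a::field \<Rightarrow> 'a \<Rightarrow> 'a fps" where
  "Fs m q t = Abs_fps (\<lambda>k. Gs m k q t * q ^ k)"

lemma fps_lin_nth:
  fixes F :: "'a::comm_ring_1 fps"
  shows "(F * (1 + fps_const c * fps_X)) $ k = F $ k + (if k = 0 then 0 else c * F $ (k - 1))"
proof -
  have "F * (1 + fps_const c * fps_X) = F + fps_const c * (F * fps_X)"
    by (simp add: algebra_simps)
  then show ?thesis by simp
qed

lemma Fs_base:
  fixes q t :: "'a::field"
  shows "Fs 0 q t * (1 + fps_const (- q) * fps_X) = 1"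
proof (rule fps_ext)
  fix k show "(Fs 0 q t * (1 + fps_const (- q) * fps_X)) $ k = (1::'a fps) $ k"
    unfolding fps_lin_nth by (cases k) (auto simp: Fs_def Gs_m0)
qed

lemma Fs_step:
  fixes q t :: "'a::field"
  shows "Fs (Suc m) q t * (1 + fps_const (- (q ^ Suc (Suc m))) * fps_X)
       = Fs m q t * (1 + fps_const (t * q ^ Suc (Suc m)) * fps_X)"
proof (rule fps_ext)
  fix k show "(Fs (Suc m) q t * (1 + fps_const (- (q ^ Suc (Suc m))) * fps_X)) $ k
       = (Fs m q t * (1 + fps_const (t * q ^ Suc (Suc m)) * fps_X)) $ k"
  proof (cases k)
    case 0 then show ?thesis unfolding fps_lin_nth by (simp add: Fs_def Gs_b0)
  next
    case (Suc j)
    have key: "Gs (Suc m) (Suc j) q t * q ^ Suc j + (- (q ^ Suc (Suc m))) * (Gs (Suc m) j q t * q ^ j)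
      = Gs m (Suc j) q t * q ^ Suc j + (t * q ^ Suc (Suc m)) * (Gs m j q t * q ^ j)"
      unfolding Gs_rec by (simp add: power_Suc algebra_simps)
    show ?thesis unfolding fps_lin_nth using key Suc by (simp add: Fs_def)
  qed
qed

lemma qpoch_P:
  fixes q t :: "'a::field"
  shows "qpoch (- fps_const (t * q ^ 2) * fps_X) (fps_const q) j
       = (\<Prod>i<j. 1 + fps_const (t * q ^ Suc (Suc i)) * fps_X)"
  unfolding qpoch_def
proof (rule prod.cong[OF refl])
  fix i
  have e: "fps_const (t * q ^ Suc (Suc i)) = fps_const (t * q ^ 2) * fps_const (q ^ i)"
  proof -
    have h: "t * q ^ Suc (Suc i) = t * q ^ 2 * q ^ i" by (simp add: power2_eq_square mult_ac)
    show ?thesis by (simp only: fps_const_mult h)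
  qed
  show "1 - - fps_const (t * q\<^sup>2) * fps_X * fps_const q ^ i = 1 + fps_const (t * q ^ Suc (Suc i)) * fps_X"
    unfolding e fps_const_power by algebra
qed

lemma qpoch_Q:
  fixes q :: "'a::field"
  shows "qpoch (fps_const q * fps_X) (fps_const q) j
       = (\<Prod>i<j. 1 + fps_const (- (q ^ Suc i)) * fps_X)"
  unfolding qpoch_def
proof (rule prod.cong[OF refl])
  fix i
  have e: "fps_const (- (q ^ Suc i)) = - (fps_const q * fps_const (q ^ i))"
    by (simp only: fps_const_mult fps_const_neg power_Suc)
  show "1 - fps_const q * fps_X * fps_const q ^ i = 1 + fps_const (- (q ^ Suc i)) * fps_X"
    unfolding e fps_const_power by algebra
qed

lemma Fs_prod:
  fixes q t :: "'a::field"
  shows "Fs m q t * (\<Prod>i<Suc m. 1 + fps_const (- (q ^ Suc i)) * fps_X)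
       = (\<Prod>i<m. 1 + fps_const (t * q ^ Suc (Suc i)) * fps_X)"
proof (induction m)
  case 0 then show ?case using Fs_base[of q t] by simp
next
  case (Suc m)
  have "Fs (Suc m) q t * (\<Prod>i<Suc (Suc m). 1 + fps_const (- (q ^ Suc i)) * fps_X)
     = (Fs (Suc m) q t * (1 + fps_const (- (q ^ Suc (Suc m))) * fps_X))
        * (\<Prod>i<Suc m. 1 + fps_const (- (q ^ Suc i)) * fps_X)"
    by (simp only: prod.lessThan_Suc[of _ "Suc m"] ac_simps)
  also have "\<dots> = (Fs m q t * (\<Prod>i<Suc m. 1 + fps_const (- (q ^ Suc i)) * fps_X))
        * (1 + fps_const (t * q ^ Suc (Suc m)) * fps_X)"
    unfolding Fs_step by (simp only: ac_simps)
  also have "\<dots> = (\<Prod>i<Suc m. 1 + fps_const (t * q ^ Suc (Suc i)) * fps_X)"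
    unfolding Suc.IH by simp
  finally show ?case .
qed

lemma prodQ_nz:
  fixes q :: "'a::field"
  shows "(\<Prod>i<j. 1 + fps_const (- (q ^ Suc i)) * fps_X) $ 0 = 1"
  by (induction j) auto

theorem theorem1p1:
  fixes q t :: "'a::field" and n :: nat
  assumes "n \<ge> 1"
  shows "Abs_fps (\<lambda>k. ogauss (int n + int k - 1) (int k) q t * q ^ k)
       = qpoch (- fps_const (t * q ^ 2) * fps_X) (fps_const q) (n - 1)
         / qpoch (fps_const q * fps_X) (fps_const q) n"
proof -
  obtain m where n: "n = Suc m" using assms by (cases n) auto
  have "Abs_fps (\<lambda>k. ogauss (int n + int k - 1) (int k) q t * q ^ k) = Fs m q t"
    unfolding Fs_def ogauss_def Gs_def n by (intro arg_cong[where f=Abs_fps] ext) auto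
  moreover
  let ?Q = "(\<Prod>i<Suc m. 1 + fps_const (- (q ^ Suc i)) * fps_X)"
  have "?Q \<noteq> 0" using prodQ_nz[where j="Suc m" and q=q] by (metis one_neq_zero fps_zero_nth)
  then have "Fs m q t = (Fs m q t * ?Q) / ?Q" by simp
  ultimately show ?thesis unfolding qpoch_P qpoch_Q n Fs_prod by simp
qed

end
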